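(* Let $M\ge 1$, let $A$ be a real $M\times M$ matrix, let $g,U_0\in\mathbb{R}^M$, let $T>0$, and let $I$ denote the $M\times M$ identity matrix. Assume there exists a diagonal matrix $D\in\mathbb{R}^{M\times M}$ with positive diagonal entries such that $DA+A^{\mathrm T}D$ is negative semidefinite. For an integer $N\ge1$ put $\Delta t=T/N$ and consider the following two processes (all inequalities between vectors are componentwise, and maxima of vectors are componentwise). (Exact process, backward Euler LCP.) Vectors $U_n,\lambda_n\in\mathbb{R}^M$, $n=1,\dots,N$, satisfy, successively for $n=1,\dots,N$, $$(I-\Delta t A)U_n = U_{n-1}+\Delta t\, g+\Delta t\,\lambda_n,\qquad \lambda_n\ge 0,\quad U_n\ge U_0,\quad (U_n-U_0)^{\mathrm T}\lambda_n=0 .$$ (Ikonen--Toivanen splitting process.) Set $\widehat U_0=U_0$ and $\widehat\lambda_0=0$, and for $n=1,\dots,N$ let $\bar\lambda_n=\widehat\lambda_{n-1}$, let $\bar U_n$ solve $$(I-\Delta t A)\bar U_n=\widehat U_{n-1}+\Delta t\, g+\Delta t\,\bar\lambda_n,$$ and let $\widehat U_n,\widehat\lambda_n\in\mathbb{R}^M$ satisfy $$\widehat U_n-\bar U_n-\Delta t\,(\widehat\lambda_n-\bar\lambda_n)=0,\qquad \widehat\lambda_n\ge0,\quad \widehat U_n\ge U_0,\quad (\widehat U_n-U_0)^{\mathrm T}\widehat\lambda_n=0.$$ Assume further that there is a real constant $\nu$, independent of $\Delta t>0$, such that $$\|\lambda_1\|_D+\sum_{n=2}^{N}\|\lambda_n-\lambda_{n-1}\|_D\le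 \nu .$$ Then $$\max_{1\le n\le N}\|U_n-\widehat U_n\|_D\le \nu\,\Delta t$$ whenever $\Delta t=T/N$ with integer $N\ge1$.
   Context: For a diagonal matrix $D$ with positive diagonal entries, the scaled inner product on $\mathbb{R}^M$ is $\langle x,y\rangle_D=y^{\mathrm T}Dx$, and $\|x\|_D=\sqrt{\langle x,x\rangle_D}=\sqrt{x^{\mathrm T}Dx}$ is the induced vector norm. The exact process is the backward Euler ($\theta=1$) time discretization of the semidiscrete complementarity problem $U'\ge AU+g$, $U\ge U_0$, $(U-U_0)^{\mathrm T}(U'-AU-g)=0$, written with an auxiliary (Lagrange multiplier) vector $\lambda_n$; the splitting process replaces it by a linear solve followed by a componentwise update, with the multiplier of the previous step used as $\bar\lambda_n$. *)

theory Defs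
  imports "HOL-Analysis.Analysis"
begin

definition dnorm :: "real^'m^'m \<Rightarrow> real^'m \<Rightarrow> real" where
  "dnorm D x = sqrt (x \<bullet> (D *v x))"

end

theory Submission imports Defs begin

definition SD :: "real^'m^'m \<Rightarrow> real^'m \<Rightarrow> real^'m" where
  "SD D x = (\<chi> i. sqrt (D$i$i) * x$i)"

lemma Dmul:
  fixes D :: "real^'m^'m"
  assumes "\<forall>i j. i \<noteq> j \<longrightarrow> D $ i $ j = 0"
  shows "(D *v y) $ i = D$i$i * y$i"
proof -
  have "(D *v y) $ i = (\<Sum>j\<in>UNIV. D$i$j * y$j)" by (simp add: matrix_vector_mult_def)
  also have "\<dots> = (\<Sum>j\<in>UNIV. if j = i then D$i$i * y$i else 0)"
    by (rule sum.cong) (use assms in auto)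
  finally show ?thesis by simp
qed

lemma inner_D:
  fixes D :: "real^'m^'m"
  assumes "\<forall>i j. i \<noteq> j \<longrightarrow> D $ i $ j = 0" "\<forall>i. D $ i $ i > 0"
  shows "x \<bullet> (D *v y) = SD D x \<bullet> SD D y"
proof -
  have "\<And>i. x$i * (D$i$i * y$i) = (sqrt (D$i$i) * x$i) * (sqrt (D$i$i) * y$i)"
  proof -
    fix i
    have "sqrt (D$i$i) * sqrt (D$i$i) = D$i$i" using assms(2) by (simp add: less_imp_le)
    then show "x$i * (D$i$i * y$i) = (sqrt (D$i$i) * x$i) * (sqrt (D$i$i) * y$i)"
      by (metis mult.assoc mult.commute)
  qed
  then show ?thesis unfolding inner_vec_def inner_real_def SD_def vec_lambda_beta Dmul[OF assms(1)]
    by (intro sum.cong refl)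
qed

lemma SD_lin: "SD D (x + y) = SD D x + SD D y" "SD D (x - y) = SD D x - SD D y"
  "SD D (c *\<^sub>R x) = c *\<^sub>R SD D x" "SD D 0 = 0"
  by (auto simp: SD_def vec_eq_iff algebra_simps)

lemma dnorm_SD:
  fixes D :: "real^'m^'m"
  assumes "\<forall>i j. i \<noteq> j \<longrightarrow> D $ i $ j = 0" "\<forall>i. D $ i $ i > 0"
  shows "dnorm D x = norm (SD D x)"
  by (simp add: dnorm_def inner_D[OF assms] norm_eq_sqrt_inner)

lemma SD_zero:
  fixes D :: "real^'m^'m"
  assumes "\<forall>i. D $ i $ i > 0" "SD D x = 0" shows "x = 0"
proof -
  have "\<And>i. sqrt (D$i$i) * x$i = 0" using assms(2) by (simp add: SD_def vec_eq_iff)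
  then show ?thesis using assms(1) by (metis less_irrefl mult_eq_0_iff real_sqrt_eq_zero_cancel_iff vec_eq_iff zero_index)
qed

lemma negA:
  fixes D A :: "real^'m^'m"
  assumes "\<forall>i j. i \<noteq> j \<longrightarrow> D $ i $ j = 0" "\<forall>i. D $ i $ i > 0"
    and "\<forall>x. x \<bullet> ((D ** A + transpose A ** D) *v x) \<le> 0"
  shows "SD D u \<bullet> SD D (A *v u) \<le> 0"
proof -
  have "u \<bullet> ((D ** A + transpose A ** D) *v u) = u \<bullet> (D *v (A *v u)) + u \<bullet> (transpose A *v (D *v u))"
    by (simp add: matrix_vector_mult_add_rdistrib matrix_vector_mul_assoc inner_add_right)
  also have "u \<bullet> (transpose A *v (D *v u)) = (A *v u) \<bullet> (D *v u)"
    by (metis dot_lmul_matrix inner_commute vector_transpose_matrix)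
  also have "\<dots> = u \<bullet> (D *v (A *v u))"
    by (simp add: inner_D[OF assms(1,2)] inner_commute)
  finally have "2 * (u \<bullet> (D *v (A *v u))) \<le> 0" using assms(3) by smt
  then show ?thesis by (simp add: inner_D[OF assms(1,2)])
qed

lemma La:
  fixes p q a b :: "'a::real_inner"
  assumes "p - q = a + b" "p \<bullet> q \<le> 0"
  shows "norm (p - b) ^ 2 \<le> norm a ^ 2 + norm b ^ 2"
proof -
  have pb: "p - b = a + q" using assms(1) by (simp add: algebra_simps)
  have bb: "b = p - q - a" using assms(1) by (simp add: algebra_simps)
  have "norm b ^2 = norm (p - a) ^2 + norm q ^2 - 2 * (p \<bullet> q) + 2 * (a \<bullet> q)"
    unfolding bb power2_norm_eq_inner by (simp add: inner_diff_left inner_diff_right inner_commute)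
  moreover have "norm (a + q) ^2 = norm a ^ 2 + 2 * (a \<bullet> q) + norm q ^ 2"
    unfolding power2_norm_eq_inner by (simp add: inner_add_left inner_add_right inner_commute)
  ultimately show ?thesis using assms(2) pb by (smt (verit) zero_le_power2)
qed

lemma Lb:
  fixes p q c :: "'a::real_inner"
  assumes "p - q = c" "p \<bullet> q \<le> 0"
  shows "norm q \<le> norm c"
proof -
  have "norm c ^ 2 = norm p ^ 2 - 2 * (p \<bullet> q) + norm q ^ 2"
    unfolding assms(1)[symmetric] power2_norm_eq_inner by (simp add: inner_diff_left inner_diff_right inner_commute)
  then have "norm q ^ 2 \<le> norm c ^ 2" using assms(2) by (smt (verit) zero_le_power2)
  then show ?thesis using power2_le_imp_le norm_ge_zero by blast
qed


lemma compl_i: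
  fixes U la U0 :: "real^'m"
  assumes "\<forall>i. la$i \<ge> 0" "\<forall>i. U$i \<ge> U0$i" "(U - U0) \<bullet> la = 0"
  shows "(U$i - U0$i) * la$i = 0"
proof -
  have "(\<Sum>j\<in>UNIV. (U$j - U0$j) * la$j) = 0" using assms(3) by (simp add: inner_vec_def)
  moreover have "\<forall>j\<in>UNIV. (U$j - U0$j) * la$j \<ge> 0" using assms(1,2) by simp
  ultimately show ?thesis using sum_nonneg_eq_0_iff[of UNIV "\<lambda>j. (U$j - U0$j) * la$j"] by simp
qed

lemma proj:
  fixes D :: "real^'m^'m" and Ua Ub la lb U0 :: "real^'m"
  assumes "\<forall>i j. i \<noteq> j \<longrightarrow> D $ i $ j = 0" "\<forall>i. D $ i $ i > 0"
    and "\<forall>i. la$i \<ge> 0" "\<forall>i. Ua$i \<ge> U0$i" "(Ua - U0) \<bullet> la = 0"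
    and "\<forall>i. lb$i \<ge> 0" "\<forall>i. Ub$i \<ge> U0$i" "(Ub - U0) \<bullet> lb = 0"
    and "c \<ge> 0"
  shows "SD D (Ua - Ub) \<bullet> SD D (c *\<^sub>R (la - lb)) \<le> 0"
proof -
  have "SD D (Ua - Ub) \<bullet> SD D (c *\<^sub>R (la - lb)) = (Ua - Ub) \<bullet> (D *v (c *\<^sub>R (la - lb)))"
    by (simp add: inner_D[OF assms(1,2)])
  also have "\<dots> = (\<Sum>i\<in>UNIV. (D$i$i * c) * ((Ua$i - Ub$i) * (la$i - lb$i)))"
    by (simp add: inner_vec_def Dmul[OF assms(1)] mult_ac)
  also have "\<dots> \<le> 0"
  proof (rule sum_nonpos)
    fix i
    have a: "(Ua$i - U0$i) * la$i = 0" by (rule compl_i[OF assms(3,4,5)])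
    have b: "(Ub$i - U0$i) * lb$i = 0" by (rule compl_i[OF assms(6,7,8)])
    have "(Ua$i - Ub$i) * (la$i - lb$i) = - ((Ua$i - U0$i) * lb$i) - (Ub$i - U0$i) * la$i"
    proof -
      have "(Ua$i - Ub$i) * (la$i - lb$i) = (Ua$i - U0$i) * la$i + (Ub$i - U0$i) * lb$i - ((Ua$i - U0$i) * lb$i) - (Ub$i - U0$i) * la$i"
        by (simp add: algebra_simps)
      then show ?thesis using a b by simp
    qed
    also have "\<dots> \<le> 0" using assms(3,4,6,7) by (smt (verit) mult_nonneg_nonneg)
    finally have "(Ua$i - Ub$i) * (la$i - lb$i) \<le> 0" .
    moreover have "D$i$i * c \<ge> 0" using assms(2,9) by (metis less_imp_le mult_nonneg_nonneg)
    ultimately show "(D$i$i * c) * ((Ua$i - Ub$i) * (la$i - lb$i)) \<le> 0"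
      by (simp add: mult_nonneg_nonpos)
  qed
  finally show ?thesis .
qed

theorem theorem1:
  fixes A D :: "real^'m^'m" and g U0 :: "real^'m" and T :: real
    and U lam Ub Uh lamh :: "nat \<Rightarrow> nat \<Rightarrow> real^'m"
  assumes T_pos: "T > 0"
    and D_diag: "\<forall>i j. i \<noteq> j \<longrightarrow> D $ i $ j = 0"
    and D_pos: "\<forall>i. D $ i $ i > 0"
    and negsemidef: "\<forall>x. x \<bullet> ((D ** A + transpose A ** D) *v x) \<le> 0"
    and exact: "\<forall>N\<ge>1. U N 0 = U0 \<and>
        (\<forall>n\<in>{1..N}.
           (mat 1 - (T / real N) *\<^sub>R A) *v U N n
             = U N (n - 1) + (T / real N) *\<^sub>R g + (T / real N) *\<^sub>R lam N n
         \<and> (\<forall>i. lam N n $ i \<ge> 0) \<and> (\<forall>i. U N n $ i \<ge> U0 $ i)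
         \<and> (U N n - U0) \<bullet> lam N n = 0)"
    and splitting: "\<forall>N\<ge>1. Uh N 0 = U0 \<and> lamh N 0 = 0 \<and>
        (\<forall>n\<in>{1..N}.
           (mat 1 - (T / real N) *\<^sub>R A) *v Ub N n
             = Uh N (n - 1) + (T / real N) *\<^sub>R g + (T / real N) *\<^sub>R lamh N (n - 1)
         \<and> Uh N n - Ub N n - (T / real N) *\<^sub>R (lamh N n - lamh N (n - 1)) = 0
         \<and> (\<forall>i. lamh N n $ i \<ge> 0) \<and> (\<forall>i. Uh N n $ i \<ge> U0 $ i)
         \<and> (Uh N n - U0) \<bullet> lamh N n = 0)"
    and nu_bound: "\<forall>N\<ge>1. dnorm D (lam N 1)
        + (\<Sum>n=2..N. dnorm D (lam N n - lam N (n - 1))) \<le> \<nu>"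
  shows "\<forall>N\<ge>1. Max ((\<lambda>n. dnorm D (U N n - Uh N n)) ` {1..N}) \<le> \<nu> * (T / real N)"
proof (intro allI impI)
  fix N :: nat assume N1: "N \<ge> 1"
  define dt where "dt = T / real N"
  have dt_pos: "dt > 0" using T_pos N1 by (simp add: dt_def)
  define B where "B = mat 1 - dt *\<^sub>R A"
  define nr where "nr x = norm (SD D x)" for x
  have dn: "dnorm D x = nr x" for x by (simp add: nr_def dnorm_SD[OF D_diag D_pos])
  have Bform: "B *v w = w - dt *\<^sub>R (A *v w)" for w
    by (simp add: B_def matrix_vector_mult_diff_rdistrib scaleR_matrix_vector_assoc)
  have negA': "SD D w \<bullet> SD D (dt *\<^sub>R (A *v w)) \<le> 0" for w
    using negA[OF D_diag D_pos negsemidef, of w] dt_pos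
    by (simp add: SD_lin mult_nonneg_nonpos less_imp_le)
  have ex0: "U N 0 = U0" and exn: "\<And>n. n\<in>{1..N} \<Longrightarrow>
           B *v U N n = U N (n - 1) + dt *\<^sub>R g + dt *\<^sub>R lam N n
         \<and> (\<forall>i. lam N n $ i \<ge> 0) \<and> (\<forall>i. U N n $ i \<ge> U0 $ i)
         \<and> (U N n - U0) \<bullet> lam N n = 0"
    using exact N1 unfolding B_def dt_def by auto
  have sp0: "Uh N 0 = U0" "lamh N 0 = 0" and spn: "\<And>n. n\<in>{1..N} \<Longrightarrow>
           B *v Ub N n = Uh N (n - 1) + dt *\<^sub>R g + dt *\<^sub>R lamh N (n - 1)
         \<and> Uh N n - Ub N n - dt *\<^sub>R (lamh N n - lamh N (n - 1)) = 0
         \<and> (\<forall>i. lamh N n $ i \<ge> 0) \<and> (\<forall>i. Uh N n $ i \<ge> U0 $ i)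
         \<and> (Uh N n - U0) \<bullet> lamh N n = 0"
    using splitting N1 unfolding B_def dt_def by auto
  have injB: "inj ((*v) B)"
  proof (rule injI)
    fix x y assume "B *v x = B *v y"
    then have "B *v (x - y) = 0" by (simp add: matrix_vector_mult_diff_distrib)
    then have w: "SD D (x - y) = SD D (dt *\<^sub>R (A *v (x - y)))" by (simp add: Bform)
    have "SD D (x - y) \<bullet> SD D (x - y) \<le> 0" using negA'[of "x - y"] by (subst (2) w) simp
    then have "SD D (x - y) = 0" by (metis inner_gt_zero_iff not_le)
    then have "x - y = 0" by (rule SD_zero[OF D_pos])
    then show "x = y" by simp
  qed
  then obtain C where C: "B ** C = mat 1"
    using matrix_left_invertible_injective matrix_left_right_inverse by metis
  define L where "L k = (if k = 0 then 0 else lam N k)" for k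
  define e where "e k = Uh N k - U N k" for k
  define d where "d k = dt *\<^sub>R (lamh N k - L k)" for k
  define del where "del k = dt *\<^sub>R (L k - L (k - 1))" for k
  define E where "E k = sqrt (nr (e k) ^ 2 + nr (d k) ^ 2)" for k
  have E0: "E 0 = 0" by (simp add: E_def e_def d_def L_def ex0 sp0 nr_def SD_lin)
  have step: "E n \<le> E (n - 1) + nr (del n)" if n: "n \<in> {1..N}" for n
  proof -
    note X = exn[OF n] and Y = spn[OF n]
    have Ln: "L n = lam N n" using n by (simp add: L_def)
    have ip: "SD D (e n) \<bullet> SD D (d n) \<le> 0"
      unfolding e_def d_def Ln using proj[OF D_diag D_pos, where Ua="Uh N n" and Ub="U N n" and la="lamh N n" and lb="lam N n" and c=dt] X Y dt_pos
      by (meson less_imp_le)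
    have "nr (e n - d n) ^ 2 = nr (e n) ^ 2 + nr (d n) ^ 2 - 2 * (SD D (e n) \<bullet> SD D (d n))"
      unfolding nr_def SD_lin power2_norm_eq_inner by (simp add: inner_diff_left inner_diff_right inner_commute)
    then have "nr (e n) ^ 2 + nr (d n) ^ 2 \<le> nr (e n - d n) ^ 2" using ip by simp
    then have E1: "E n \<le> nr (e n - d n)" unfolding E_def
      by (metis nr_def norm_ge_zero real_sqrt_abs real_sqrt_le_mono abs_of_nonneg)
    define u where "u = Ub N n - U N n"
    have Bu: "B *v u = e (n - 1) + d (n - 1) - del n"
    proof -
      have "B *v u = B *v Ub N n - B *v U N n" by (simp add: u_def matrix_vector_mult_diff_distrib)
      also have "\<dots> = e (n - 1) + dt *\<^sub>R lamh N (n - 1) - dt *\<^sub>R lam N n"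
        using X Y by (simp add: e_def algebra_simps)
      finally show ?thesis by (simp add: d_def del_def Ln algebra_simps)
    qed
    have ed: "e n - d n = u - (d (n - 1) - del n)"
    proof -
      have "Uh N n = Ub N n + dt *\<^sub>R (lamh N n - lamh N (n - 1))" using Y by (simp add: algebra_simps)
      then show ?thesis by (simp add: e_def d_def del_def u_def Ln algebra_simps)
    qed
    define u2 where "u2 = C *v del n"
    have Bu2: "B *v u2 = del n" by (simp add: u2_def matrix_vector_mul_assoc C)
    define u1 where "u1 = u + u2"
    have Bu1: "B *v u1 = e (n - 1) + d (n - 1)" using Bu Bu2
      by (simp add: u1_def matrix_vector_right_distrib)
    have split: "e n - d n = (u1 - d (n - 1)) - (u2 - del n)" by (simp add: ed u1_def)
    have a: "nr (u1 - d (n - 1)) \<le> E (n - 1)"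
    proof -
      have "norm (SD D u1 - SD D (d (n - 1))) ^ 2 \<le> norm (SD D (e (n - 1))) ^ 2 + norm (SD D (d (n - 1))) ^ 2"
        apply (rule La[of _ "SD D (dt *\<^sub>R (A *v u1))"])
        using Bu1 negA'[of u1] by (auto simp: Bform SD_lin[symmetric])
      then show ?thesis unfolding E_def nr_def SD_lin
        by (metis norm_ge_zero real_sqrt_abs real_sqrt_le_mono abs_of_nonneg)
    qed
    have b: "nr (u2 - del n) \<le> nr (del n)"
    proof -
      have "u2 - del n = dt *\<^sub>R (A *v u2)" using Bu2 by (simp add: Bform[of u2] algebra_simps del: Bu2)
      moreover have "SD D u2 - SD D (dt *\<^sub>R (A *v u2)) = SD D (del n)"
        using Bu2 by (simp add: Bform SD_lin(2)[symmetric])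
      ultimately show ?thesis unfolding nr_def
        using Lb[of "SD D u2" "SD D (dt *\<^sub>R (A *v u2))" "SD D (del n)"] negA'[of u2]
        by simp
    qed
    have "nr (e n - d n) \<le> nr (u1 - d (n - 1)) + nr (u2 - del n)"
      unfolding split nr_def SD_lin by (rule norm_triangle_ineq4)
    then show ?thesis using E1 a b by linarith
  qed
  have ind: "n \<le> N \<Longrightarrow> E n \<le> (\<Sum>k=1..n. nr (del k))" for n
  proof (induction n)
    case 0 then show ?case by (simp add: E0)
  next
    case (Suc n)
    then have "E (Suc n) \<le> E n + nr (del (Suc n))" using step[of "Suc n"] by simp
    also have "\<dots> \<le> (\<Sum>k=1..n. nr (del k)) + nr (del (Suc n))" using Suc by simp
    finally show ?case by (simp add: sum.cl_ivl_Suc)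
  qed
  have nrs: "nr (c *\<^sub>R x) = c * nr x" if "c \<ge> 0" for c x
    using that by (simp add: nr_def SD_lin)
  have tot: "(\<Sum>k=1..N. nr (del k)) \<le> dt * \<nu>"
  proof -
    have "(\<Sum>k=1..N. nr (del k)) = nr (del 1) + (\<Sum>k=2..N. nr (del k))"
      using N1 sum.atLeast_Suc_atMost[of 1 N] by (simp add: numeral_2_eq_2)
    also have "nr (del 1) = dt * dnorm D (lam N 1)"
      using dt_pos by (simp add: del_def L_def nrs dn)
    also have "(\<Sum>k=2..N. nr (del k)) = (\<Sum>k=2..N. dt * dnorm D (lam N k - lam N (k - 1)))"
      by (rule sum.cong) (use dt_pos in \<open>auto simp: del_def L_def nrs dn\<close>)
    also have "dt * dnorm D (lam N 1) + \<dots> = dt * (dnorm D (lam N 1) + (\<Sum>k=2..N. dnorm D (lam N k - lam N (k - 1))))"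
      by (simp add: sum_distrib_left distrib_left)
    also have "\<dots> \<le> dt * \<nu>" using nu_bound N1 dt_pos by simp
    finally show ?thesis .
  qed
  have "dnorm D (U N n - Uh N n) \<le> \<nu> * (T / real N)" if n: "n \<in> {1..N}" for n
  proof -
    have "dnorm D (U N n - Uh N n) = nr (e n)"
      by (simp add: dn e_def nr_def SD_lin norm_minus_commute)
    also have "\<dots> \<le> E n" unfolding E_def
      by (metis nr_def le_add_same_cancel1 norm_ge_zero real_sqrt_le_mono real_sqrt_abs abs_of_nonneg zero_le_power2)
    also have "\<dots> \<le> (\<Sum>k=1..n. nr (del k))" using ind n by simp
    also have "\<dots> \<le> (\<Sum>k=1..N. nr (del k))"
      by (rule sum_mono2) (use n in \<open>auto simp: nr_def\<close>)
    also have "\<dots> \<le> \<nu> * (T / real N)" using tot by (simp add: dt_def mult.commute)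
    finally show ?thesis .
  qed
  then show "Max ((\<lambda>n. dnorm D (U N n - Uh N n)) ` {1..N}) \<le> \<nu> * (T / real N)"
    using N1 by (subst Max_le_iff) auto
qed

end
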